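(* Let $\gamma\in\mathcal{C}\cap C^{1,1}(\mathbb{S}_1,\mathbb{R}^d)$ with $\Delta[\gamma]>0$, let $L=1$, and let $n$ be so large that $2L\Delta[\gamma]^{-1}n^{-1}\le\pi/6$. If $x=\gamma(s)$, $y=\gamma(t)$, $z=\gamma(u)$ with $s<t<u$, $|t-s|\le 2L/n$ and $|u-t|\le 2L/n$, then $$\kappa_d(x,y,z)\le\big(1+16L^2\Delta[\gamma]^{-2}n^{-2}\big)\Delta[\gamma]^{-1}.$$
   Context: $\mathbb{S}_1=\mathbb{R}/\mathbb{Z}$. $\mathcal{C}$ is the set of $\gamma\in W^{1,\infty}(\mathbb{S}_1,\mathbb{R}^d)$ with $|\gamma'|=1$ a.e.; $C^{1,1}$ means $\gamma'$ Lipschitz. For pairwise distinct $x,y,z$, $r(x,y,z)$ is the radius of the circle through $x,y,z$ ($=\infty$ if collinear), and $\Delta[\gamma]=\inf\{r(x,y,z): x,y,z\in\gamma(\mathbb{S}_1)\text{ pairwise distinct}\}$. For three points $x,y,z$ with $\phi=\measuredangle(y-x,z-y)$, $\kappa_d(x,y,z)=\frac{2\tan(\phi/2)}{(|x-y|+|z-y|)/2}$. *)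

theory Defs
  imports "HOL-Analysis.Analysis"
begin

definition vec_angle :: "'a::real_inner \<Rightarrow> 'a \<Rightarrow> real" where
  "vec_angle u v = arccos ((u \<bullet> v) / (norm u * norm v))"

text \<open>For pairwise distinct points, r = |x - z| / (2 sin theta), theta the angle at y;
  the points are collinear iff sin theta = 0.\<close>
definition circumradius :: "'a::real_inner \<Rightarrow> 'a \<Rightarrow> 'a \<Rightarrow> ereal" where
  "circumradius x y z =
     (let th = vec_angle (x - y) (z - y) in
      if sin th = 0 then \<infinity> else ereal (norm (x - z) / (2 * sin th)))"

text \<open>Thickness Delta[gamma] of a closed curve parametrised on R with period 1.\<close>
definition thickness :: "(real \<Rightarrow> 'a::real_inner) \<Rightarrow> ereal" where
  "thickness \<gamma> = (INF p \<in> {(x, y, z). x \<in> \<gamma> ` {0..1} \<and> y \<in> \<gamma> ` {0..1} \<and> z \<in> \<gamma> ` {0..1}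
                         \<and> x \<noteq> y \<and> y \<noteq> z \<and> x \<noteq> z}.
                     (case p of (x, y, z) \<Rightarrow> circumradius x y z))"

definition kappa_d :: "'a::real_inner \<Rightarrow> 'a \<Rightarrow> 'a \<Rightarrow> real" where
  "kappa_d x y z = 2 * tan (vec_angle (y - x) (z - y) / 2) / ((norm (x - y) + norm (z - y)) / 2)"

end

theory Submission imports Defs begin

lemma cos_bound: "\<bar>p \<bullet> q / (norm p * norm q)\<bar> \<le> (1::real)"
proof (cases "norm p * norm q = 0")
  case False
  then have "norm p * norm q > 0" by (simp add: order_less_le)
  then show ?thesis using Cauchy_Schwarz_ineq2[of p q] by (simp add: abs_div divide_le_eq_1)
qed auto

lemma sin_vec_angle: "sin (vec_angle p q) = sqrt (1 - (p \<bullet> q / (norm p * norm q))\<^sup>2)"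
  unfolding vec_angle_def using cos_bound[of p q] by (simp add: sin_arccos_abs abs_square_le_1)

lemma vec_angle_nonneg_sin: "sin (vec_angle p q) \<ge> 0"
  using cos_bound[of p q] by (simp add: sin_vec_angle abs_square_le_1)

lemma vec_angle_scale: "h > 0 \<Longrightarrow> vec_angle (h *\<^sub>R p) q = vec_angle p q"
  unfolding vec_angle_def by (simp add: abs_of_pos)

lemma dot_lower_unit:
  fixes T a b :: "'a::real_inner"
  assumes "norm T = 1" "norm a = 1" "norm b = 1"
  shows "a \<bullet> b \<ge> (T \<bullet> a) * (T \<bullet> b) - sqrt (1 - (T \<bullet> a)\<^sup>2) * sqrt (1 - (T \<bullet> b)\<^sup>2)"
proof -
  define p where "p = a - (T \<bullet> a) *\<^sub>R T"
  define q where "q = b - (T \<bullet> b) *\<^sub>R T"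
  have TT: "T \<bullet> T = 1" using assms(1) by (simp add: dot_square_norm)
  have aa: "a \<bullet> a = 1" using assms(2) by (simp add: dot_square_norm)
  have bb: "b \<bullet> b = 1" using assms(3) by (simp add: dot_square_norm)
  have ab: "a \<bullet> b = (T \<bullet> a) * (T \<bullet> b) + p \<bullet> q"
    unfolding p_def q_def using TT by (simp add: algebra_simps inner_commute)
  have pp: "norm p = sqrt (1 - (T \<bullet> a)\<^sup>2)"
    unfolding norm_eq_sqrt_inner p_def using TT aa by (simp add: algebra_simps inner_commute power2_eq_square)
  have qq: "norm q = sqrt (1 - (T \<bullet> b)\<^sup>2)"
    unfolding norm_eq_sqrt_inner q_def using TT bb by (simp add: algebra_simps inner_commute power2_eq_square)
  have "p \<bullet> q \<ge> - (norm p * norm q)" using Cauchy_Schwarz_ineq2[of p q] by linarith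
  then show ?thesis using ab pp qq by simp
qed

lemma dot_lower:
  fixes T u v :: "'a::real_inner"
  assumes "norm T = 1" "u \<noteq> 0" "v \<noteq> 0"
  shows "u \<bullet> v / (norm u * norm v) \<ge> (T \<bullet> u / norm u) * (T \<bullet> v / norm v)
          - sqrt (1 - (T \<bullet> u / norm u)\<^sup>2) * sqrt (1 - (T \<bullet> v / norm v)\<^sup>2)"
proof -
  have "(u /\<^sub>R norm u) \<bullet> (v /\<^sub>R norm v) \<ge> (T \<bullet> (u /\<^sub>R norm u)) * (T \<bullet> (v /\<^sub>R norm v))
     - sqrt (1 - (T \<bullet> (u /\<^sub>R norm u))\<^sup>2) * sqrt (1 - (T \<bullet> (v /\<^sub>R norm v))\<^sup>2)"
    using assms by (intro dot_lower_unit) auto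
  moreover have "(u /\<^sub>R norm u) \<bullet> (v /\<^sub>R norm v) = u \<bullet> v / (norm u * norm v)"
    by (simp add: divide_inverse_commute)
  moreover have "T \<bullet> (u /\<^sub>R norm u) = T \<bullet> u / norm u" "T \<bullet> (v /\<^sub>R norm v) = T \<bullet> v / norm v"
    by (simp_all add: divide_inverse_commute)
  ultimately show ?thesis by metis
qed

lemma sigma_bound:
  fixes c1 c2 \<sigma> :: real
  assumes "0 < c1" "0 < c2" "c1 \<le> 1" "c2 \<le> 1" "sqrt (1 - c1\<^sup>2) \<le> \<sigma>" "sqrt (1 - c2\<^sup>2) \<le> \<sigma>"
  shows "c1 * c2 - sqrt (1 - c1\<^sup>2) * sqrt (1 - c2\<^sup>2) \<ge> 1 - 2 * \<sigma>\<^sup>2"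
proof -
  have n1: "1 - c1\<^sup>2 \<ge> 0" "1 - c2\<^sup>2 \<ge> 0" using assms by (auto simp: power_le_one abs_square_le_1)
  have "0 \<le> sqrt (1 - c1\<^sup>2)" using n1(1) by simp
  then have s0: "\<sigma> \<ge> 0" using assms(5) by linarith
  have A: "sqrt (1 - c1\<^sup>2) * sqrt (1 - c2\<^sup>2) \<le> \<sigma> * \<sigma>"
    using assms(5,6) n1 s0 by (intro mult_mono) auto
  have B1: "1 - c1\<^sup>2 \<le> \<sigma>\<^sup>2" using assms(5) n1(1) s0 by (simp add: real_sqrt_le_iff sqrt_le_D)
  have B2: "1 - c2\<^sup>2 \<le> \<sigma>\<^sup>2" using assms(6) n1(2) s0 by (simp add: real_sqrt_le_iff sqrt_le_D)
  have C: "c1 * c2 \<ge> 1 - \<sigma>\<^sup>2"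
  proof (cases "1 - \<sigma>\<^sup>2 \<le> 0")
    case True
    have "c1 * c2 > 0" using assms(1,2) by simp
    then show ?thesis using True by linarith
  next
    case False
    have "c1\<^sup>2 \<ge> 1 - \<sigma>\<^sup>2" "c2\<^sup>2 \<ge> 1 - \<sigma>\<^sup>2" using B1 B2 by linarith+
    then have P: "(1 - \<sigma>\<^sup>2) * (1 - \<sigma>\<^sup>2) \<le> c1\<^sup>2 * c2\<^sup>2"
      using False by (intro mult_mono) auto
    have E1: "(c1 * c2)\<^sup>2 = c1\<^sup>2 * c2\<^sup>2" by (rule power_mult_distrib)
    have E2: "(1 - \<sigma>\<^sup>2)\<^sup>2 = (1 - \<sigma>\<^sup>2) * (1 - \<sigma>\<^sup>2)" by (rule power2_eq_square)
    have "(1 - \<sigma>\<^sup>2)\<^sup>2 \<le> (c1 * c2)\<^sup>2" unfolding E1 E2 by (rule P)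
    moreover have "0 \<le> c1 * c2" using assms(1,2) by simp
    ultimately show ?thesis by (rule power2_le_imp_le)
  qed
  show ?thesis using A C unfolding power2_eq_square by linarith
qed

lemma cancel3: "(N::real) \<noteq> 0 \<Longrightarrow> D \<noteq> 0 \<Longrightarrow> E \<noteq> 0 \<Longrightarrow> 2 * N / D / (E * N) = 2 / (D * E)"
  by (simp add: field_simps)

locale curve =
  fixes \<gamma> \<gamma>' :: "real \<Rightarrow> 'a::euclidean_space"
  assumes periodic: "\<And>r. \<gamma> (r + 1) = \<gamma> r"
    and deriv: "\<And>r. (\<gamma> has_vector_derivative \<gamma>' r) (at r)"
    and arclength: "AE r in lborel. norm (\<gamma>' r) = 1"
    and C11: "\<exists>C. C-lipschitz_on UNIV \<gamma>'"
begin

lemma cont': "continuous_on UNIV \<gamma>'"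
proof -
  obtain C where "C-lipschitz_on UNIV \<gamma>'" using C11 by blast
  then show ?thesis by (rule lipschitz_on_continuous_on)
qed

lemma unit: "norm (\<gamma>' r) = 1"
proof (rule ccontr)
  assume r: "norm (\<gamma>' r) \<noteq> 1"
  let ?S = "(\<lambda>r. norm (\<gamma>' r)) -` (-{1})"
  have "open ?S"
    by (rule open_vimage) (simp_all add: continuous_on_norm cont' open_Compl)
  moreover have "?S \<noteq> {}" using r by auto
  moreover have "negligible ?S"
  proof -
    obtain N where N: "{x \<in> space lborel. \<not> norm (\<gamma>' x) = 1} \<subseteq> N" and N2: "emeasure lborel N = 0" "N \<in> sets lborel"
      using arclength by (rule AE_E)
    have "N \<in> null_sets lborel" using N2 by (rule null_setsI)
    then have "N \<in> null_sets lebesgue" by (rule null_sets_completionI)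
    then have "negligible N" by (simp add: negligible_iff_null_sets)
    moreover have "?S \<subseteq> N" using N(1) by auto
    ultimately show ?thesis using negligible_subset[of N ?S] by simp
  qed
  ultimately show False using open_not_negligible[of ?S] by simp
qed

lemma mvt_dot:
  assumes "a < b"
  shows "\<exists>\<xi>\<in>{a<..<b}. (\<gamma> b - \<gamma> a) \<bullet> T = (b - a) * (\<gamma>' \<xi> \<bullet> T)"
proof -
  have "\<exists>\<xi>\<in>{a<..<b}. (\<lambda>r. \<gamma> r \<bullet> T) b - (\<lambda>r. \<gamma> r \<bullet> T) a = (\<lambda>h. h * (\<gamma>' \<xi> \<bullet> T)) (b - a)"
  proof (rule mvt_simple[OF assms])
    fix x
    have "((\<lambda>r. \<gamma> r \<bullet> T) has_derivative (\<lambda>h. (h *\<^sub>R \<gamma>' x) \<bullet> T)) (at x)"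
      using deriv[of x] unfolding has_vector_derivative_def
      by (intro has_derivative_inner_left)
    then show "((\<lambda>r. \<gamma> r \<bullet> T) has_derivative (\<lambda>h. h * (\<gamma>' x \<bullet> T))) (at x within {a..b})"
      by (auto intro: has_derivative_at_withinI)
  qed
  then show ?thesis by (simp add: inner_diff_left)
qed

lemma in_range: "\<gamma> r \<in> \<gamma> ` {0..1}"
proof -
  have nat_shift: "\<gamma> (x + real k) = \<gamma> x" for x k
  proof (induction k)
    case (Suc k)
    have "x + real (Suc k) = (x + real k) + 1" by simp
    then show ?case using periodic[of "x + real k"] Suc.IH by (simp only:)
  qed simp
  let ?m = "floor r"
  have "\<gamma> r = \<gamma> (frac r)"
  proof (cases "?m \<ge> 0")
    case True
    have "r = frac r + real (nat ?m)" using True by (simp add: frac_def)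
    then show ?thesis using nat_shift by metis
  next
    case False
    have "frac r = r + real (nat (- ?m))" using False by (simp add: frac_def)
    then show ?thesis using nat_shift by metis
  qed
  moreover have "frac r \<in> {0..1}" using frac_lt_1[of r] frac_ge_0[of r] by auto
  ultimately show ?thesis by blast
qed

lemma thick_le:
  assumes "\<gamma> x \<noteq> \<gamma> y" "\<gamma> y \<noteq> \<gamma> z" "\<gamma> x \<noteq> \<gamma> z"
  shows "thickness \<gamma> \<le> circumradius (\<gamma> x) (\<gamma> y) (\<gamma> z)"
  unfolding thickness_def
  using in_range[of x] in_range[of y] in_range[of z] assms
  by (auto intro!: INF_lower2[of "(\<gamma> x, \<gamma> y, \<gamma> z)"])


lemma tri:
  assumes R: "R > 0" "ereal R \<le> thickness \<gamma>"
    and ne: "\<gamma> x \<noteq> \<gamma> y" "\<gamma> y \<noteq> \<gamma> z" "\<gamma> x \<noteq> \<gamma> z"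
  shows "2 * R * sin (vec_angle (\<gamma> x - \<gamma> y) (\<gamma> z - \<gamma> y)) \<le> norm (\<gamma> x - \<gamma> z)"
proof -
  let ?s = "sin (vec_angle (\<gamma> x - \<gamma> y) (\<gamma> z - \<gamma> y))"
  have le: "ereal R \<le> circumradius (\<gamma> x) (\<gamma> y) (\<gamma> z)"
    using thick_le[OF ne] R(2) by (rule order.trans[rotated])
  show ?thesis
  proof (cases "?s = 0")
    case True then show ?thesis by simp
  next
    case False
    then have pos: "?s > 0" using vec_angle_nonneg_sin[of "\<gamma> x - \<gamma> y" "\<gamma> z - \<gamma> y"] by linarith
    from le False have "R \<le> norm (\<gamma> x - \<gamma> z) / (2 * ?s)"
      by (simp add: circumradius_def Let_def)
    then show ?thesis using pos by (simp add: field_simps)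
  qed
qed

lemma diff_sq: "norm (u - v)^2 = norm u ^2 + norm v ^2 - 2 * (u \<bullet> v)" for u v :: 'a
  by (simp add: power2_norm_eq_inner inner_diff_left inner_diff_right inner_commute)

lemma FPgen:
  assumes "a < b" "norm T = 1" "\<And>r. a \<le> r \<Longrightarrow> r \<le> b \<Longrightarrow> norm (\<gamma>' r - T) \<le> 1"
  shows "(\<gamma> b - \<gamma> a) \<bullet> T > 0"
proof -
  obtain \<xi> where \<xi>: "\<xi> \<in> {a<..<b}" "(\<gamma> b - \<gamma> a) \<bullet> T = (b - a) * (\<gamma>' \<xi> \<bullet> T)"
    using mvt_dot[OF assms(1)] by blast
  have "norm (\<gamma>' \<xi> - T) \<le> 1" using \<xi>(1) assms(3) by auto
  then have "norm (\<gamma>' \<xi> - T)^2 \<le> 1" by (simp add: power_le_one)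
  then have "\<gamma>' \<xi> \<bullet> T \<ge> 1/2" using diff_sq[of "\<gamma>' \<xi>" T] unit[of \<xi>] assms(2) by simp
  then show ?thesis using \<xi>(2) assms(1) by simp
qed

lemma chord_le:
  assumes "a \<le> b"
  shows "norm (\<gamma> b - \<gamma> a) \<le> b - a"
proof (cases "\<gamma> b = \<gamma> a")
  case False
  then have ab: "a < b" using assms by (metis order_le_less)
  let ?d = "\<gamma> b - \<gamma> a"
  let ?T = "?d /\<^sub>R norm ?d"
  obtain \<xi> where \<xi>: "(\<gamma> b - \<gamma> a) \<bullet> ?T = (b - a) * (\<gamma>' \<xi> \<bullet> ?T)"
    using mvt_dot[OF ab] by blast
  have "?d \<bullet> ?T = norm ?d" using False by (simp add: power2_norm_eq_inner[symmetric] power2_eq_square)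
  moreover have "\<gamma>' \<xi> \<bullet> ?T \<le> 1"
    using norm_cauchy_schwarz[of "\<gamma>' \<xi>" ?T] unit[of \<xi>] False by simp
  ultimately show ?thesis using \<xi> ab by (metis mult_le_cancel_left1 diff_gt_0_iff_gt order_less_le mult.commute mult_left_le)
qed (use assms in simp)

lemma cont_gamma: "isCont \<gamma> r"
  using deriv has_vector_derivative_continuous by blast

lemma diffquot: "((\<lambda>h. (1/h) *\<^sub>R (\<gamma> a - \<gamma> (a + h))) \<longlongrightarrow> - \<gamma>' a) (at 0)"
proof -
  have "(\<gamma> has_derivative (\<lambda>h. h *\<^sub>R \<gamma>' a)) (at a)" using deriv[of a] by (simp add: has_vector_derivative_def)
  then have "(\<lambda>h. norm (\<gamma> (a + h) - \<gamma> a - h *\<^sub>R \<gamma>' a) / norm h) \<midarrow>0\<rightarrow> 0"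
    by (simp add: has_derivative_at)
  moreover have "norm (\<gamma> (a + h) - \<gamma> a - h *\<^sub>R \<gamma>' a) / norm h = norm ((1/h) *\<^sub>R (\<gamma> a - \<gamma> (a + h)) - - \<gamma>' a)"
    if "h \<noteq> 0" for h
  proof -
    have "(1/h) *\<^sub>R (\<gamma> a - \<gamma> (a + h)) - - \<gamma>' a = (-(1/h)) *\<^sub>R (\<gamma> (a + h) - \<gamma> a - h *\<^sub>R \<gamma>' a)"
      using that by (simp add: algebra_simps)
    then show ?thesis using that by (simp add: divide_inverse abs_inverse)
  qed
  ultimately have "(\<lambda>h. norm ((1/h) *\<^sub>R (\<gamma> a - \<gamma> (a + h)) - - \<gamma>' a)) \<midarrow>0\<rightarrow> 0"
    by (subst tendsto_cong[symmetric]) (auto simp: eventually_at_filter)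
  then show ?thesis by (simp add: tendsto_norm_zero_iff LIM_zero_cancel)
qed

lemma PT:
  assumes R: "R > 0" "ereal R \<le> thickness \<gamma>" and ne: "\<gamma> a \<noteq> \<gamma> b"
  shows "2 * R * sqrt (1 - ((\<gamma>' a \<bullet> (\<gamma> b - \<gamma> a)) / norm (\<gamma> b - \<gamma> a))\<^sup>2) \<le> norm (\<gamma> b - \<gamma> a)"
proof -
  define d where "d = \<gamma> b - \<gamma> a"
  define P where "P h = (1/h) *\<^sub>R (\<gamma> a - \<gamma> (a + h))" for h
  define Q where "Q h = \<gamma> b - \<gamma> (a + h)" for h
  have dne: "d \<noteq> 0" using ne by (simp add: d_def)
  have limP: "(P \<longlongrightarrow> - \<gamma>' a) (at_right 0)"
    unfolding P_def by (rule tendsto_within_subset[OF diffquot subset_UNIV])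
  have limG: "((\<lambda>h. \<gamma> (a + h)) \<longlongrightarrow> \<gamma> a) (at_right 0)"
  proof -
    have "(\<lambda>h. \<gamma> (a + h)) \<midarrow>0\<rightarrow> \<gamma> a"
      using cont_gamma[of a] unfolding isCont_def by (rule LIM_offset_zero)
    then show ?thesis by (rule tendsto_within_subset[OF _ subset_UNIV])
  qed
  have limQ: "(Q \<longlongrightarrow> d) (at_right 0)"
    unfolding Q_def d_def by (intro tendsto_intros limG)
  have n1: "norm (\<gamma>' a) = 1" by (rule unit)
  have limc: "((\<lambda>h. P h \<bullet> Q h / (norm (P h) * norm (Q h))) \<longlongrightarrow> (- \<gamma>' a) \<bullet> d / (norm (- \<gamma>' a) * norm d)) (at_right 0)"
    using n1 dne by (intro tendsto_intros limP limQ) auto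
  have limF: "((\<lambda>h. 2 * R * sqrt (1 - (P h \<bullet> Q h / (norm (P h) * norm (Q h)))\<^sup>2)) \<longlongrightarrow>
       2 * R * sqrt (1 - ((- \<gamma>' a) \<bullet> d / (norm (- \<gamma>' a) * norm d))\<^sup>2)) (at_right 0)"
    by (intro tendsto_intros limc)
  have ev1: "eventually (\<lambda>h. \<gamma> (a + h) \<noteq> \<gamma> b) (at_right 0)"
    using tendsto_imp_eventually_ne[OF limG ne] .
  have ev2: "eventually (\<lambda>h. P h \<noteq> 0) (at_right 0)"
  proof -
    have "- \<gamma>' a \<noteq> 0" using n1 by auto
    then show ?thesis by (rule tendsto_imp_eventually_ne[OF limP])
  qed
  have ev3: "eventually (\<lambda>h. h > 0) (at_right (0::real))"
    by (simp add: eventually_at_right_less)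
  have ev: "eventually (\<lambda>h. 2 * R * sqrt (1 - (P h \<bullet> Q h / (norm (P h) * norm (Q h)))\<^sup>2) \<le> norm d) (at_right 0)"
    using ev1 ev2 ev3
  proof eventually_elim
    case (elim h)
    have "\<gamma> a \<noteq> \<gamma> (a + h)" using elim(2) by (auto simp: P_def)
    then have "2 * R * sin (vec_angle (\<gamma> a - \<gamma> (a + h)) (\<gamma> b - \<gamma> (a + h))) \<le> norm (\<gamma> a - \<gamma> b)"
      using tri[OF R, of a "a + h" b] elim(1) ne by auto
    moreover have "\<gamma> a - \<gamma> (a + h) = h *\<^sub>R P h" using elim(3) by (simp add: P_def)
    ultimately show ?case using elim(3)
      by (simp add: vec_angle_scale Q_def sin_vec_angle d_def norm_minus_commute)
  qed
  have "2 * R * sqrt (1 - ((- \<gamma>' a) \<bullet> d / (norm (- \<gamma>' a) * norm d))\<^sup>2) \<le> norm d"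
    by (rule tendsto_le[OF _ tendsto_const limF ev]) simp
  then show ?thesis using n1 by (simp add: d_def power2_eq_square)
qed

lemma Kex: "\<exists>K\<ge>1. \<forall>x y. norm (\<gamma>' x - \<gamma>' y) \<le> K * \<bar>x - y\<bar>"
proof -
  obtain C where C: "C-lipschitz_on UNIV \<gamma>'" using C11 by blast
  have "norm (\<gamma>' x - \<gamma>' y) \<le> max C 1 * \<bar>x - y\<bar>" for x y
  proof -
    have "dist (\<gamma>' x) (\<gamma>' y) \<le> C * dist x y" using C by (auto simp: lipschitz_on_def)
    also have "\<dots> \<le> max C 1 * dist x y" by (intro mult_right_mono) auto
    finally show ?thesis by (simp add: dist_norm dist_real_def)
  qed
  then show ?thesis by (intro exI[of _ "max C 1"]) auto
qed

lemma LB: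
  assumes R: "R > 0" "ereal R \<le> thickness \<gamma>"
    and K: "K \<ge> 1" "\<And>x y. norm (\<gamma>' x - \<gamma>' y) \<le> K * \<bar>x - y\<bar>"
    and ab: "a < b" "b - a \<le> 1 / K"
  shows "norm (\<gamma>' a - \<gamma>' b) \<le> (b - a) / R"
proof -
  define d where "d = \<gamma> b - \<gamma> a"
  have Kba: "K * (b - a) \<le> 1" using ab K(1) by (simp add: field_simps)
  have f1: "d \<bullet> \<gamma>' a > 0" unfolding d_def
  proof (rule FPgen[OF ab(1) unit])
    fix r assume "a \<le> r" "r \<le> b"
    then have "K * \<bar>r - a\<bar> \<le> K * (b - a)" using K(1) by (intro mult_left_mono) auto
    then show "norm (\<gamma>' r - \<gamma>' a) \<le> 1" using K(2)[of r a] Kba by linarith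
  qed
  have f2: "d \<bullet> \<gamma>' b > 0" unfolding d_def
  proof (rule FPgen[OF ab(1) unit])
    fix r assume "a \<le> r" "r \<le> b"
    then have "K * \<bar>r - b\<bar> \<le> K * (b - a)" using K(1) by (intro mult_left_mono) auto
    then show "norm (\<gamma>' r - \<gamma>' b) \<le> 1" using K(2)[of r b] Kba by linarith
  qed
  have dne: "d \<noteq> 0" using f1 by auto
  have ne: "\<gamma> a \<noteq> \<gamma> b" using dne by (simp add: d_def)
  have dle: "norm d \<le> b - a" unfolding d_def using chord_le ab by simp
  define \<sigma> where "\<sigma> = (b - a) / (2 * R)"
  define c1 where "c1 = \<gamma>' a \<bullet> d / norm d"
  define c2 where "c2 = \<gamma>' b \<bullet> d / norm d"
  have p1: "2 * R * sqrt (1 - c1\<^sup>2) \<le> b - a"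
    using PT[OF R ne] dle unfolding c1_def d_def by linarith
  have p2: "2 * R * sqrt (1 - c2\<^sup>2) \<le> b - a"
  proof -
    have "2 * R * sqrt (1 - ((\<gamma>' b \<bullet> (\<gamma> a - \<gamma> b)) / norm (\<gamma> a - \<gamma> b))\<^sup>2) \<le> norm (\<gamma> a - \<gamma> b)"
      using PT[OF R] ne by metis
    moreover have "\<gamma> a - \<gamma> b = - d" by (simp add: d_def)
    ultimately show ?thesis using dle unfolding c2_def by (simp add: power2_eq_square)
  qed
  have s1: "sqrt (1 - c1\<^sup>2) \<le> \<sigma>" using p1 R(1) unfolding \<sigma>_def by (simp add: field_simps)
  have s2: "sqrt (1 - c2\<^sup>2) \<le> \<sigma>" using p2 R(1) unfolding \<sigma>_def by (simp add: field_simps)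
  have c1pos: "c1 > 0" using f1 dne by (simp add: c1_def inner_commute)
  have c2pos: "c2 > 0" using f2 dne by (simp add: c2_def inner_commute)
  have c1le: "c1 \<le> 1"
  proof -
    have "\<bar>\<gamma>' a \<bullet> d\<bar> / norm d \<le> 1" using cos_bound[of "\<gamma>' a" d] unit[of a] by simp
    moreover have "\<gamma>' a \<bullet> d / norm d \<le> \<bar>\<gamma>' a \<bullet> d\<bar> / norm d" by (simp add: divide_right_mono)
    ultimately show ?thesis unfolding c1_def by linarith
  qed
  have c2le: "c2 \<le> 1"
  proof -
    have "\<bar>\<gamma>' b \<bullet> d\<bar> / norm d \<le> 1" using cos_bound[of "\<gamma>' b" d] unit[of b] by simp
    moreover have "\<gamma>' b \<bullet> d / norm d \<le> \<bar>\<gamma>' b \<bullet> d\<bar> / norm d" by (simp add: divide_right_mono)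
    ultimately show ?thesis unfolding c2_def by linarith
  qed
  have e1: "norm (d /\<^sub>R norm d) = 1" using dne by simp
  have D: "\<gamma>' a \<bullet> \<gamma>' b \<ge> ((d /\<^sub>R norm d) \<bullet> \<gamma>' a) * ((d /\<^sub>R norm d) \<bullet> \<gamma>' b)
        - sqrt (1 - ((d /\<^sub>R norm d) \<bullet> \<gamma>' a)\<^sup>2) * sqrt (1 - ((d /\<^sub>R norm d) \<bullet> \<gamma>' b)\<^sup>2)"
    by (rule dot_lower_unit[OF e1 unit unit])
  have E: "(d /\<^sub>R norm d) \<bullet> \<gamma>' a = c1" "(d /\<^sub>R norm d) \<bullet> \<gamma>' b = c2"
    by (simp_all add: c1_def c2_def inner_commute divide_inverse mult.commute)
  have dot: "\<gamma>' a \<bullet> \<gamma>' b \<ge> 1 - 2 * \<sigma>\<^sup>2"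
    using D sigma_bound[OF c1pos c2pos c1le c2le s1 s2] unfolding E by linarith
  have "(norm (\<gamma>' a - \<gamma>' b))^2 \<le> (2 * \<sigma>)^2"
  proof -
    have "(norm (\<gamma>' a - \<gamma>' b))^2 = 2 - 2 * (\<gamma>' a \<bullet> \<gamma>' b)"
      using diff_sq[of "\<gamma>' a" "\<gamma>' b"] unfolding unit by simp
    moreover have "(2 * \<sigma>)^2 = 4 * \<sigma>^2" by (simp add: power_mult_distrib)
    ultimately show ?thesis using dot by linarith
  qed
  moreover have "2 * \<sigma> \<ge> 0"
  proof -
    have "b - a \<ge> 0" "2 * R > 0" using ab R(1) by simp_all
    then have "\<sigma> \<ge> 0" unfolding \<sigma>_def by (rule divide_nonneg_pos)
    then show ?thesis by simp
  qed
  ultimately have "norm (\<gamma>' a - \<gamma>' b) \<le> 2 * \<sigma>" by (rule power2_le_imp_le)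
  moreover have "2 * \<sigma> = (b - a) / R" unfolding \<sigma>_def using R(1) by (simp add: field_simps)
  ultimately show ?thesis by simp
qed

lemma LIP:
  assumes R: "R > 0" "ereal R \<le> thickness \<gamma>"
  shows "norm (\<gamma>' a - \<gamma>' b) \<le> \<bar>a - b\<bar> / R"
proof -
  obtain K where K: "K \<ge> 1" "\<And>x y. norm (\<gamma>' x - \<gamma>' y) \<le> K * \<bar>x - y\<bar>" using Kex by blast
  have Kpos: "K > 0" using K(1) by simp
  have main: "\<forall>a b. a \<le> b \<longrightarrow> b - a \<le> real N / K \<longrightarrow> norm (\<gamma>' a - \<gamma>' b) \<le> (b - a) / R" for N
  proof (induction N)
    case 0
    then show ?case by auto
  next
    case (Suc N)
    show ?case
    proof (intro allI impI)
      fix a b :: real assume ab: "a \<le> b" "b - a \<le> real (Suc N) / K"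
      show "norm (\<gamma>' a - \<gamma>' b) \<le> (b - a) / R"
      proof (cases "b - a \<le> 1 / K")
        case True
        show ?thesis
        proof (cases "a = b")
          case False
          then have "a < b" using ab by simp
          then show ?thesis using LB[OF R K _ True] by blast
        qed simp
      next
        case False
        define m where "m = a + 1 / K"
        have am: "a < m" "m - a = 1 / K" using Kpos by (simp_all add: m_def)
        have mb: "m \<le> b" using False by (simp add: m_def)
        have "b - m \<le> real N / K" using ab(2) unfolding m_def by (simp add: add_divide_distrib)
        then have h2: "norm (\<gamma>' m - \<gamma>' b) \<le> (b - m) / R" using Suc.IH mb by blast
        have h1: "norm (\<gamma>' a - \<gamma>' m) \<le> (m - a) / R" using LB[OF R K am(1)] am(2) by simp
        have "norm (\<gamma>' a - \<gamma>' b) \<le> norm (\<gamma>' a - \<gamma>' m) + norm (\<gamma>' m - \<gamma>' b)"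
          using norm_triangle_ineq[of "\<gamma>' a - \<gamma>' m" "\<gamma>' m - \<gamma>' b"] by simp
        also have "\<dots> \<le> (m - a) / R + (b - m) / R" using h1 h2 by linarith
        also have "\<dots> = (b - a) / R" by (simp add: diff_divide_distrib)
        finally show ?thesis .
      qed
    qed
  qed
  have gen: "norm (\<gamma>' a - \<gamma>' b) \<le> (b - a) / R" if "a \<le> b" for a b
  proof -
    obtain N where N: "(b - a) * K \<le> real N" using real_arch_simple by blast
    then have "b - a \<le> real N / K" using Kpos by (simp add: pos_le_divide_eq)
    then show ?thesis using main that by blast
  qed
  show ?thesis
  proof (cases "a \<le> b")
    case True then show ?thesis using gen[OF True] by simp
  next
    case False
    then have "norm (\<gamma>' b - \<gamma>' a) \<le> (a - b) / R" using gen[of b a] by simp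
    then show ?thesis using False by (simp add: norm_minus_commute)
  qed
qed

lemma thick_fin: "thickness \<gamma> \<noteq> \<infinity>"
proof
  assume inf: "thickness \<gamma> = \<infinity>"
  have const: "\<gamma>' r = \<gamma>' 0" for r
  proof (rule ccontr)
    assume ne: "\<gamma>' r \<noteq> \<gamma>' 0"
    define x where "x = norm (\<gamma>' r - \<gamma>' 0)"
    have xpos: "x > 0" using ne by (simp add: x_def)
    define R where "R = 2 * (\<bar>r\<bar> + 1) / x"
    have Rpos: "R > 0" using xpos by (simp add: R_def add_pos_nonneg)
    have "x \<le> \<bar>r - 0\<bar> / R" unfolding x_def using LIP[OF Rpos, of r 0] inf by simp
    also have "\<dots> = x * \<bar>r\<bar> / (2 * (\<bar>r\<bar> + 1))" using xpos by (simp add: R_def)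
    also have "\<dots> < x"
    proof -
      have h: "x * \<bar>r\<bar> < x * (2 * (\<bar>r\<bar> + 1))" using xpos by (intro mult_strict_left_mono) auto
      have d: "0 < 2 * (\<bar>r\<bar> + 1)" by (smt (verit) abs_ge_zero)
      show ?thesis unfolding pos_divide_less_eq[OF d] by (rule h)
    qed
    finally show False by simp
  qed
  obtain \<xi> where "(\<gamma> 1 - \<gamma> 0) \<bullet> \<gamma>' 0 = (1 - 0) * (\<gamma>' \<xi> \<bullet> \<gamma>' 0)"
    using mvt_dot[of 0 1 "\<gamma>' 0"] by auto
  moreover have "\<gamma> 1 = \<gamma> 0" using periodic[of 0] by simp
  moreover have "\<gamma>' 0 \<bullet> \<gamma>' 0 = 1" using unit[of 0] by (simp add: dot_square_norm)
  ultimately show False using const[of \<xi>] by simp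
qed

end

theorem mainTheorem16:
  fixes \<gamma> \<gamma>' :: "real \<Rightarrow> 'a::euclidean_space"
    and n :: nat and s t u :: real
  assumes periodic: "\<And>r. \<gamma> (r + 1) = \<gamma> r"
    and deriv: "\<And>r. (\<gamma> has_vector_derivative \<gamma>' r) (at r)"
    and arclength: "AE r in lborel. norm (\<gamma>' r) = 1"
    and C11: "\<exists>C. C-lipschitz_on UNIV \<gamma>'"
    and thick_pos: "thickness \<gamma> > 0"
    and n_pos: "n > 0"
    and n_large: "2 * 1 / (real_of_ereal (thickness \<gamma>) * real n) \<le> pi / 6"
    and order: "s < t" "t < u"
    and close1: "\<bar>t - s\<bar> \<le> 2 * 1 / real n"
    and close2: "\<bar>u - t\<bar> \<le> 2 * 1 / real n"
  shows "kappa_d (\<gamma> s) (\<gamma> t) (\<gamma> u)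
         \<le> (1 + 16 * 1^2 / (real_of_ereal (thickness \<gamma>) ^ 2 * real n ^ 2))
             / real_of_ereal (thickness \<gamma>)"
proof -
  interpret curve \<gamma> \<gamma>' using periodic deriv arclength C11 by unfold_locales
  define \<Delta> where "\<Delta> = real_of_ereal (thickness \<gamma>)"
  have thE: "thickness \<gamma> = ereal \<Delta>" and \<Delta>pos: "\<Delta> > 0"
    using thick_pos thick_fin unfolding \<Delta>_def by (cases "thickness \<gamma>"; simp)+
  have R: "\<Delta> > 0" "ereal \<Delta> \<le> thickness \<gamma>" using \<Delta>pos thE by simp_all
  have npos: "real n > 0" using n_pos by simp
  define \<sigma> where "\<sigma> = 1 / (\<Delta> * real n)"
  have \<sigma>pos: "\<sigma> > 0" using \<Delta>pos npos by (simp add: \<sigma>_def)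
  have \<sigma>small: "2 * \<sigma> \<le> pi / 6" using n_large by (simp add: \<sigma>_def \<Delta>_def)
  have \<sigma>1: "2 * \<sigma> \<le> 1" using \<sigma>small pi_less_4 by linarith
  have \<sigma>2: "\<sigma>\<^sup>2 \<le> 1/4"
  proof -
    have "\<sigma> \<le> 1/2" using \<sigma>1 by simp
    then have "\<sigma> * \<sigma> \<le> (1/2) * (1/2)" using \<sigma>pos by (intro mult_mono) auto
    then show ?thesis by (simp add: power2_eq_square)
  qed
  define T where "T = \<gamma>' t"
  have T1: "norm T = 1" unfolding T_def by (rule unit)
  have h: "2 / real n = 2 * \<sigma> * \<Delta>" using \<Delta>pos by (simp add: \<sigma>_def)
  have lipT: "norm (\<gamma>' r - T) \<le> 1" if "s \<le> r" "r \<le> u" for r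
  proof -
    have "norm (\<gamma>' r - T) \<le> \<bar>r - t\<bar> / \<Delta>" unfolding T_def by (rule LIP[OF R])
    also have "\<bar>r - t\<bar> \<le> 2 / real n" using that close1 close2 order by auto
    then have "\<bar>r - t\<bar> / \<Delta> \<le> 2 * \<sigma>" using \<Delta>pos h by (simp add: divide_le_eq mult.commute)
    finally show ?thesis using \<sigma>1 by linarith
  qed
  define p where "p = \<gamma> t - \<gamma> s"
  define q where "q = \<gamma> u - \<gamma> t"
  have fp: "p \<bullet> T > 0" unfolding p_def by (rule FPgen[OF order(1) T1]) (use lipT order in auto)
  have fq: "q \<bullet> T > 0" unfolding q_def by (rule FPgen[OF order(2) T1]) (use lipT order in auto)
  have pne: "p \<noteq> 0" using fp by auto
  have qne: "q \<noteq> 0" using fq by auto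
  have np: "norm p \<le> 2 / real n" unfolding p_def using chord_le[of s t] order close1 by simp
  have nq: "norm q \<le> 2 / real n" unfolding q_def using chord_le[of t u] order close2 by simp
  define c1 where "c1 = T \<bullet> p / norm p"
  define c2 where "c2 = T \<bullet> q / norm q"
  have c1pos: "c1 > 0" using fp pne by (simp add: c1_def inner_commute)
  have c2pos: "c2 > 0" using fq qne by (simp add: c2_def inner_commute)
  have c1le: "c1 \<le> 1"
  proof -
    have "\<bar>T \<bullet> p\<bar> / norm p \<le> 1" using cos_bound[of T p] T1 by simp
    moreover have "T \<bullet> p / norm p \<le> \<bar>T \<bullet> p\<bar> / norm p" by (simp add: divide_right_mono)
    ultimately show ?thesis unfolding c1_def by linarith
  qed
  have c2le: "c2 \<le> 1"
  proof -
    have "\<bar>T \<bullet> q\<bar> / norm q \<le> 1" using cos_bound[of T q] T1 by simp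
    moreover have "T \<bullet> q / norm q \<le> \<bar>T \<bullet> q\<bar> / norm q" by (simp add: divide_right_mono)
    ultimately show ?thesis unfolding c2_def by linarith
  qed
  have s1: "sqrt (1 - c1\<^sup>2) \<le> \<sigma>"
  proof -
    have ne: "\<gamma> t \<noteq> \<gamma> s" using pne by (simp add: p_def)
    have "2 * \<Delta> * sqrt (1 - ((\<gamma>' t \<bullet> (\<gamma> s - \<gamma> t)) / norm (\<gamma> s - \<gamma> t))\<^sup>2) \<le> norm (\<gamma> s - \<gamma> t)"
      by (rule PT[OF R ne])
    moreover have "\<gamma> s - \<gamma> t = - p" by (simp add: p_def)
    ultimately have "2 * \<Delta> * sqrt (1 - c1\<^sup>2) \<le> norm p" by (simp add: c1_def T_def power2_eq_square)
    then have "2 * \<Delta> * sqrt (1 - c1\<^sup>2) \<le> 2 * \<sigma> * \<Delta>" using np h by linarith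
    then show ?thesis using \<Delta>pos by simp
  qed
  have s2: "sqrt (1 - c2\<^sup>2) \<le> \<sigma>"
  proof -
    have ne: "\<gamma> t \<noteq> \<gamma> u" using qne by (simp add: q_def)
    have "2 * \<Delta> * sqrt (1 - ((\<gamma>' t \<bullet> (\<gamma> u - \<gamma> t)) / norm (\<gamma> u - \<gamma> t))\<^sup>2) \<le> norm (\<gamma> u - \<gamma> t)"
      by (rule PT[OF R ne])
    then have "2 * \<Delta> * sqrt (1 - c2\<^sup>2) \<le> norm q" by (simp add: c2_def T_def q_def)
    then have "2 * \<Delta> * sqrt (1 - c2\<^sup>2) \<le> 2 * \<sigma> * \<Delta>" using nq h by linarith
    then show ?thesis using \<Delta>pos by simp
  qed
  define c where "c = p \<bullet> q / (norm p * norm q)"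
  have cge: "c \<ge> 1 - 2 * \<sigma>\<^sup>2"
    using dot_lower[OF T1 pne qne] sigma_bound[OF c1pos c2pos c1le c2le s1 s2]
    unfolding c_def c1_def c2_def by linarith
  have cbd: "\<bar>c\<bar> \<le> 1" unfolding c_def by (rule cos_bound)
  have cpos: "c > 0" using cge \<sigma>2 by linarith
  define \<phi> where "\<phi> = vec_angle p q"
  have cos\<phi>: "cos \<phi> = c" unfolding \<phi>_def vec_angle_def c_def[symmetric] using cbd by simp
  have sin\<phi>: "sin \<phi> = sqrt (1 - c\<^sup>2)" unfolding \<phi>_def c_def by (rule sin_vec_angle)
  have tan\<phi>: "tan (\<phi> / 2) = sin \<phi> / (c + 1)" using tan_half[of "\<phi> / 2"] cos\<phi> by simp
  have xz: "\<gamma> s \<noteq> \<gamma> u"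
  proof
    assume "\<gamma> s = \<gamma> u"
    then have "q = - p" by (simp add: p_def q_def)
    then have "c = -1" using pne by (simp add: c_def dot_square_norm power2_eq_square)
    then show False using cpos by simp
  qed
  have sinle: "2 * \<Delta> * sin \<phi> \<le> norm p + norm q"
  proof -
    have "2 * \<Delta> * sin (vec_angle (\<gamma> s - \<gamma> t) (\<gamma> u - \<gamma> t)) \<le> norm (\<gamma> s - \<gamma> u)"
      using tri[OF R] pne qne xz by (simp add: p_def q_def)
    moreover have "\<gamma> s - \<gamma> t = - p" "\<gamma> u - \<gamma> t = q" by (simp_all add: p_def q_def)
    moreover have "\<gamma> s - \<gamma> u = - (p + q)" by (simp add: p_def q_def)
    moreover have "sin (vec_angle (- p) q) = sin \<phi>"
      unfolding \<phi>_def sin_vec_angle by simp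
    moreover have "norm (- p - q) = norm (p + q)"
    proof -
      have "- p - q = - (p + q)" by simp
      then show ?thesis by (simp only: norm_minus_cancel)
    qed
    ultimately have "2 * \<Delta> * sin \<phi> \<le> norm (p + q)" by simp
    also have "\<dots> \<le> norm p + norm q" by (rule norm_triangle_ineq)
    finally show ?thesis .
  qed
  have pqpos: "norm p + norm q > 0" using pne by (simp add: add_pos_nonneg)
  have kap: "kappa_d (\<gamma> s) (\<gamma> t) (\<gamma> u) = 4 * sin \<phi> / ((c + 1) * (norm p + norm q))"
  proof -
    have "kappa_d (\<gamma> s) (\<gamma> t) (\<gamma> u) = 2 * tan (\<phi> / 2) / ((norm p + norm q) / 2)"
      unfolding kappa_d_def \<phi>_def p_def q_def by (simp add: norm_minus_commute)
    then show ?thesis using tan\<phi> cpos by (simp add: field_simps)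
  qed
  have "kappa_d (\<gamma> s) (\<gamma> t) (\<gamma> u) \<le> 2 / (\<Delta> * (c + 1))"
  proof -
    have "4 * sin \<phi> \<le> 2 * (norm p + norm q) / \<Delta>" using sinle \<Delta>pos by (simp add: field_simps)
    then have "4 * sin \<phi> / ((c + 1) * (norm p + norm q)) \<le> 2 * (norm p + norm q) / \<Delta> / ((c + 1) * (norm p + norm q))"
      using cpos pqpos by (intro divide_right_mono) auto
    also have "\<dots> = 2 / (\<Delta> * (c + 1))"
      using cancel3[of "norm p + norm q" \<Delta> "c + 1"] pqpos cpos \<Delta>pos by simp
    finally show ?thesis using kap by simp
  qed
  also have "\<dots> \<le> (1 + 16 * \<sigma>\<^sup>2) / \<Delta>"
  proof -
    have c1: "c + 1 \<ge> 2 * (1 - \<sigma>\<^sup>2)" using cge by simp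
    have pos: "1 - \<sigma>\<^sup>2 > 0" using \<sigma>2 by simp
    have "2 \<le> (1 + 16 * \<sigma>\<^sup>2) * (2 * (1 - \<sigma>\<^sup>2))"
    proof -
      have "(1 + 16 * \<sigma>\<^sup>2) * (2 * (1 - \<sigma>\<^sup>2)) = 2 + 2 * \<sigma>\<^sup>2 * (15 - 16 * \<sigma>\<^sup>2)" by (simp add: algebra_simps power2_eq_square)
      moreover have "2 * \<sigma>\<^sup>2 * (15 - 16 * \<sigma>\<^sup>2) \<ge> 0" using \<sigma>2 by simp
      ultimately show ?thesis by linarith
    qed
    also have "\<dots> \<le> (1 + 16 * \<sigma>\<^sup>2) * (c + 1)" using c1 by (intro mult_left_mono) auto
    finally have "2 \<le> (1 + 16 * \<sigma>\<^sup>2) * (c + 1)" .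
    then have "2 / (c + 1) \<le> 1 + 16 * \<sigma>\<^sup>2" using cpos by (simp add: pos_divide_le_eq mult.commute)
    then have "2 / (c + 1) / \<Delta> \<le> (1 + 16 * \<sigma>\<^sup>2) / \<Delta>" using \<Delta>pos by (intro divide_right_mono) auto
    moreover have "2 / (c + 1) / \<Delta> = 2 / (\<Delta> * (c + 1))" by (simp add: mult.commute)
    ultimately show ?thesis by (simp only:)
  qed
  also have "\<dots> = (1 + 16 * 1^2 / (real_of_ereal (thickness \<gamma>) ^ 2 * real n ^ 2)) / real_of_ereal (thickness \<gamma>)"
    unfolding \<Delta>_def[symmetric] \<sigma>_def by (simp add: power_mult_distrib power_divide)
  finally show ?thesis .
qed

end
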